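(* Consider the one-dimensional relativistic hydrodynamics system $\partial_t\mathbf{u}+\partial_x\mathbf{f}(\mathbf{u})=0$ with $\mathbf{u}=(D,m_1,E)^\top$ and $\mathbf{f}(\mathbf{u})=(Dv_1,\,m_1v_1+p,\,m_1)^\top$, closed by any one of the equations of state ID-EOS, TM-EOS, IP-EOS or RC-EOS described in the context. Let $\mathcal{U}'_{\mathrm{ad}}=\{(D,m_1,E): D>0,\ E-\sqrt{D^2+m_1^2}>0\}$. Let $\Delta x>0$, $\Delta t>0$, $w_i>0$, and let $\mathbf{u}^n_{i-1},\mathbf{u}^n_i,\mathbf{u}^n_{i+1}\in\mathcal{U}'_{\mathrm{ad}}$. Define \[ \mathbf{u}^{n+1}_i=\mathbf{u}^n_i-\frac{\Delta t}{w_i\Delta x}\Big[\mathbf{f}^{\mathrm{NF}}(\mathbf{u}^n_i,\mathbf{u}^n_{i+1})-\mathbf{f}^{\mathrm{NF}}(\mathbf{u}^n_{i-1},\mathbf{u}^n_i)\Big], \] where $\mathbf{f}^{\mathrm{NF}}$ is the Rusanov flux \[ \mathbf{f}^{\mathrm{NF}}(\mathbf{u}^-,\mathbf{u}^+)=\tfrac12\big[\mathbf{f}(\mathbf{u}^-)+\mathbf{f}(\mathbf{u}^+)\big]-\tfrac12\lambda(\mathbf{u}^-,\mathbf{u}^+)\,[\mathbf{u}^+-\mathbf{u}^-],\qquad \lambda(\mathbf{u}^-,\mathbf{u}^+)=\max\{r(\mathbf{u}^-),r(\mathbf{u}^+)\}, \] with $r(\mathbf{u})=\dfrac{|v_1|+c_s}{1+c_s|v_1|}$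 the spectral radius of the flux Jacobian $\mathbf{f}'(\mathbf{u})$. Set $\Lambda_{i-\frac12}=\lambda(\mathbf{u}^n_{i-1},\mathbf{u}^n_i)$ and $\Lambda_{i+\frac12}=\lambda(\mathbf{u}^n_i,\mathbf{u}^n_{i+1})$. If \[ \Delta t\,\frac{\Lambda_{i-\frac12}+\Lambda_{i+\frac12}}{2w_i\Delta x}<1, \] then $\mathbf{u}^{n+1}_i\in\mathcal{U}'_{\mathrm{ad}}$.
   Context: Units with speed of light $1$. Primitive variables: rest-mass density $\rho$, velocity $v_1$, pressure $p$; Lorentz factor $\Gamma=1/\sqrt{1-v_1^2}$; specific enthalpy $h$ given by an equation of state; conservative variables $D=\rho\Gamma$, $m_1=\rho h\Gamma^2 v_1$, $E=\rho h\Gamma^2-p$. The equations of state and corresponding sound speeds $c_s$ are: ID-EOS: $h=1+\frac{\gamma}{\gamma-1}\frac{p}{\rho}$ with constant $\gamma\in(1,2]$, $c_s^2=\frac{\gamma p}{h\rho}$; TM-EOS: $h=\frac{5p}{2\rho}+\sqrt{\frac{9p^2}{4\rho^2}+1}$, $c_s^2=\frac{5p\sqrt{9p^2+4\rho^2}+9p^2}{12p\sqrt{9p^2+4\rho^2}+36p^2+6\rho^2}$; IP-EOS: $h=\frac{2p}{\rho}+\sqrt{\frac{4p^2}{\rho^2}+1}$, $c_s^2=\frac{2p\sqrt{4p^2+\rho^2}}{4p\sqrt{4p^2+\rho^2}+4p^2+\rho^2}$; RC-EOS: $h=\frac{2(6p^2+4p\rho+\rho^2)}{\rho(3p+2\rho)}$,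 $c_s^2=\frac{p(3p+2\rho)(18p^2+24p\rho+5\rho^2)}{3(6p^2+4p\rho+\rho^2)(9p^2+12p\rho+2\rho^2)}$. For each of these equations of state, every $\mathbf{u}\in\mathcal{U}'_{\mathrm{ad}}$ corresponds to unique primitive variables with $\rho>0$, $p>0$, $|v_1|<1$ (this is how $v_1,p,c_s$ and $\mathbf{f}(\mathbf{u})$ are evaluated from $\mathbf{u}$), and $0<c_s<1$. The numbers $w_i$ are positive quadrature weights (sub-cell widths relative to $\Delta x$) of a first-order finite volume update at the $i$-th point. *)

theory Defs
  imports "HOL-Analysis.Analysis"
begin

text \<open>Equations of state. ID gamma is the ideal-gas EOS with adiabatic index gamma.\<close>
datatype eos = ID_EOS real | TM_EOS | IP_EOS | RC_EOS

definition eos_ok :: "eos \<Rightarrow> bool" where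
  "eos_ok e = (case e of ID_EOS g \<Rightarrow> 1 < g \<and> g \<le> 2 | _ \<Rightarrow> True)"

fun enthalpy :: "eos \<Rightarrow> real \<Rightarrow> real \<Rightarrow> real" where
  "enthalpy (ID_EOS g) rho p = 1 + g / (g - 1) * p / rho"
| "enthalpy TM_EOS rho p = 5 * p / (2 * rho) + sqrt (9 * p\<^sup>2 / (4 * rho\<^sup>2) + 1)"
| "enthalpy IP_EOS rho p = 2 * p / rho + sqrt (4 * p\<^sup>2 / rho\<^sup>2 + 1)"
| "enthalpy RC_EOS rho p = 2 * (6 * p\<^sup>2 + 4 * p * rho + rho\<^sup>2) / (rho * (3 * p + 2 * rho))"

fun sound_speed_sq :: "eos \<Rightarrow> real \<Rightarrow> real \<Rightarrow> real" where
  "sound_speed_sq (ID_EOS g) rho p = g * p / (enthalpy (ID_EOS g) rho p * rho)"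
| "sound_speed_sq TM_EOS rho p =
     (5 * p * sqrt (9 * p\<^sup>2 + 4 * rho\<^sup>2) + 9 * p\<^sup>2) /
     (12 * p * sqrt (9 * p\<^sup>2 + 4 * rho\<^sup>2) + 36 * p\<^sup>2 + 6 * rho\<^sup>2)"
| "sound_speed_sq IP_EOS rho p =
     (2 * p * sqrt (4 * p\<^sup>2 + rho\<^sup>2)) /
     (4 * p * sqrt (4 * p\<^sup>2 + rho\<^sup>2) + 4 * p\<^sup>2 + rho\<^sup>2)"
| "sound_speed_sq RC_EOS rho p =
     (p * (3 * p + 2 * rho) * (18 * p\<^sup>2 + 24 * p * rho + 5 * rho\<^sup>2)) /
     (3 * (6 * p\<^sup>2 + 4 * p * rho + rho\<^sup>2) * (9 * p\<^sup>2 + 12 * p * rho + 2 * rho\<^sup>2))"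

definition cons_of :: "eos \<Rightarrow> real \<Rightarrow> real \<Rightarrow> real \<Rightarrow> real \<times> real \<times> real" where
  "cons_of e rho v p =
     (let G = 1 / sqrt (1 - v\<^sup>2); h = enthalpy e rho p
      in (rho * G, rho * h * G\<^sup>2 * v, rho * h * G\<^sup>2 - p))"

definition Uad :: "(real \<times> real \<times> real) set" where
  "Uad = {(D, m, E). D > 0 \<and> E - sqrt (D\<^sup>2 + m\<^sup>2) > 0}"

definition prim :: "eos \<Rightarrow> real \<times> real \<times> real \<Rightarrow> real \<times> real \<times> real" where
  "prim e u = (THE (rho, v, p). rho > 0 \<and> p > 0 \<and> \<bar>v\<bar> < 1 \<and> cons_of e rho v p = u)"

definition vel :: "eos \<Rightarrow> real \<times> real \<times> real \<Rightarrow> real" where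
  "vel e u = fst (snd (prim e u))"

definition pres :: "eos \<Rightarrow> real \<times> real \<times> real \<Rightarrow> real" where
  "pres e u = snd (snd (prim e u))"

definition sound_speed :: "eos \<Rightarrow> real \<times> real \<times> real \<Rightarrow> real" where
  "sound_speed e u = sqrt (sound_speed_sq e (fst (prim e u)) (pres e u))"

definition flux :: "eos \<Rightarrow> real \<times> real \<times> real \<Rightarrow> real \<times> real \<times> real" where
  "flux e u = (case u of (D, m, E) \<Rightarrow> (D * vel e u, m * vel e u + pres e u, m))"

definition spec_rad :: "eos \<Rightarrow> real \<times> real \<times> real \<Rightarrow> real" where
  "spec_rad e u = (\<bar>vel e u\<bar> + sound_speed e u) / (1 + sound_speed e u * \<bar>vel e u\<bar>)"

definition lam :: "eos \<Rightarrow> real \<times> real \<times> real \<Rightarrow> real \<times> real \<times> real \<Rightarrow> real" where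
  "lam e um up = max (spec_rad e um) (spec_rad e up)"

definition rusanov :: "eos \<Rightarrow> real \<times> real \<times> real \<Rightarrow> real \<times> real \<times> real \<Rightarrow> real \<times> real \<times> real" where
  "rusanov e um up = (1/2) *\<^sub>R (flux e um + flux e up) - (lam e um up / 2) *\<^sub>R (up - um)"

end

theory Submission
  imports Defs
begin


lemma core_alg:
  fixes \<rho> p P v G c l :: real
  assumes r0: "\<rho> > 0" and p0: "p > 0" and Pp: "P > p" and v1: "\<bar>v\<bar> < 1" and G0: "G > 0"
    and GG: "G\<^sup>2 * (1 - v\<^sup>2) = 1" and c0: "c \<ge> 0"
    and cs: "c\<^sup>2 * ((P - p)\<^sup>2 - \<rho>\<^sup>2) \<ge> p\<^sup>2" and A0: "(P - p)\<^sup>2 - \<rho>\<^sup>2 - p\<^sup>2 \<ge> 0"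
    and lr: "l \<ge> (\<bar>v\<bar> + c) / (1 + c * \<bar>v\<bar>)"
  shows "\<rho> * G * (l - v) \<ge> 0"
    and "l * (P * G\<^sup>2 - p) - P * G\<^sup>2 * v \<ge> sqrt ((\<rho> * G * (l - v))\<^sup>2 + (P * G\<^sup>2 * v * (l - v) - p)\<^sup>2)"
proof -
  define s where "s = \<bar>v\<bar>"
  define r where "r = (s + c) / (1 + c * s)"
  define A where "A = (P - p)\<^sup>2 - \<rho>\<^sup>2 - p\<^sup>2"
  have s0: "s \<ge> 0" and s1: "s < 1" using v1 by (auto simp: s_def)
  have vs: "v \<le> s" and vs2: "v\<^sup>2 = s\<^sup>2" by (auto simp: s_def)
  have cs0: "1 + c * s > 0" using c0 s0 by (simp add: add_pos_nonneg)
  have cpos: "c > 0"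
  proof (rule ccontr)
    assume "\<not> c > 0" then have "c = 0" using c0 by simp
    then show False using cs p0 by simp
  qed
  have rs: "r - s = c * (1 - s\<^sup>2) / (1 + c * s)"
    using cs0 by (simp add: r_def field_simps power2_eq_square)
  have rs0: "r - s \<ge> 0" unfolding rs using cpos s0 s1 cs0
    by (intro divide_nonneg_pos mult_nonneg_nonneg) (auto simp: power2_eq_square abs_square_less_1 intro: mult_le_one)
  have r0': "r \<ge> 0" using rs0 s0 by simp
  have rr: "r * (1 + c * s) = s + c" using cs0 by (simp add: r_def)
  have r2: "(1 - r\<^sup>2) * (1 + c * s)\<^sup>2 = (1 - c\<^sup>2) * (1 - s\<^sup>2)"
  proof -
    have "(1 - r\<^sup>2) * (1 + c * s)\<^sup>2 = (1 + c * s)\<^sup>2 - (r * (1 + c * s))\<^sup>2" by (simp add: algebra_simps power2_eq_square)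
    also have "\<dots> = (1 - c\<^sup>2) * (1 - s\<^sup>2)" unfolding rr by (simp add: algebra_simps power2_eq_square)
    finally show ?thesis .
  qed
  have lr': "l \<ge> r" using lr by (simp add: r_def s_def)
  have ls: "l - v \<ge> l - s" using vs by simp
  have lsr: "l - s \<ge> r - s" using lr' by simp
  have l0: "l \<ge> 0" using lr' r0' by simp
  have x1: "\<rho> * G * (l - v) \<ge> 0" using r0 G0 ls lsr rs0 by simp
  show "\<rho> * G * (l - v) \<ge> 0" by (fact x1)
  have cPp: "c * (P - p) \<ge> p"
  proof -
    have "(c * (P - p))\<^sup>2 \<ge> p\<^sup>2" using cs r0 c0
      by (smt (verit) mult_nonneg_nonneg power_mult_distrib right_diff_distrib zero_le_power2)
    then show ?thesis using cpos Pp p0 by (meson abs_le_square_iff abs_of_pos less_le_not_le order.strict_trans2 zero_less_mult_iff diff_gt_0_iff_gt power2_le_imp_le mult_nonneg_nonneg)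
  qed
  have e3: "l * (P * G\<^sup>2 - p) - P * G\<^sup>2 * v = G\<^sup>2 * (P * (l - v) - l * p * (1 - v\<^sup>2))"
  proof -
    have h: "l * p * (G\<^sup>2 * (1 - v\<^sup>2)) - l * p = 0" using GG by simp
    have "l * (P * G\<^sup>2 - p) - P * G\<^sup>2 * v = G\<^sup>2 * (P * (l - v) - l * p * (1 - v\<^sup>2)) + (l * p * (G\<^sup>2 * (1 - v\<^sup>2)) - l * p)"
      by (simp add: algebra_simps)
    then show ?thesis unfolding h by simp
  qed
  have F1: "P * (l - v) - l * p * (1 - v\<^sup>2) \<ge> P * (l - s) - l * p * (1 - s\<^sup>2)"
    using ls Pp p0 vs2 by (simp add: mult_left_mono)
  have F2: "P * (l - s) - l * p * (1 - s\<^sup>2) = (l - r) * (P - p * (1 - s\<^sup>2)) + (P * (r - s) - r * p * (1 - s\<^sup>2))"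
    by (simp add: algebra_simps)
  have s2: "0 \<le> 1 - s\<^sup>2" "1 - s\<^sup>2 \<le> 1" using s0 s1 by (auto simp: power2_eq_square intro: mult_le_one)
  have F3: "(l - r) * (P - p * (1 - s\<^sup>2)) \<ge> 0"
  proof -
    have "p * (1 - s\<^sup>2) \<le> p" using s2 p0 by (simp add: mult_left_le)
    then show ?thesis using lr' Pp by simp
  qed
  have F4: "(P * (r - s) - r * p * (1 - s\<^sup>2)) * (1 + c * s) = (1 - s\<^sup>2) * (c * (P - p) - s * p)"
  proof -
    have "(P * (r - s) - r * p * (1 - s\<^sup>2)) * (1 + c * s) = P * (r * (1 + c * s)) - P * s * (1 + c * s) - (r * (1 + c * s)) * p * (1 - s\<^sup>2)"
      by (simp add: algebra_simps)
    also have "\<dots> = (1 - s\<^sup>2) * (c * (P - p) - s * p)" unfolding rr by (simp add: algebra_simps power2_eq_square)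
    finally show ?thesis .
  qed
  have F5: "(1 - s\<^sup>2) * (c * (P - p) - s * p) \<ge> 0"
  proof -
    have "s * p \<le> p" using s1 s0 p0 by (simp add: mult_left_le_one_le)
    then show ?thesis using cPp s2 by simp
  qed
  have F6: "P * (r - s) - r * p * (1 - s\<^sup>2) \<ge> 0"
    using F4 F5 cs0 by (metis zero_le_mult_iff not_less)
  have x3: "l * (P * G\<^sup>2 - p) - P * G\<^sup>2 * v \<ge> 0"
    unfolding e3 using F1 F2 F3 F6 by simp
  have id: "(l * (P * G\<^sup>2 - p) - P * G\<^sup>2 * v)\<^sup>2 - (\<rho> * G * (l - v))\<^sup>2 - (P * G\<^sup>2 * v * (l - v) - p)\<^sup>2
     = G\<^sup>2 * ((l - v)\<^sup>2 * A - p\<^sup>2 * (1 - v\<^sup>2) * (1 - l\<^sup>2)) + (G\<^sup>2 * (1 - v\<^sup>2) - 1) * (P\<^sup>2 * G\<^sup>2 * (l - v)\<^sup>2 - p\<^sup>2 * (l\<^sup>2 - 1))"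
    by (simp add: A_def algebra_simps power2_eq_square)
  have K1: "(l - v)\<^sup>2 * A \<ge> (r - s)\<^sup>2 * A"
  proof -
    have "(r - s)\<^sup>2 \<le> (l - v)\<^sup>2" using rs0 ls lsr by (intro power_mono) auto
    then show ?thesis using A0 by (simp add: A_def mult_right_mono)
  qed
  have K2: "p\<^sup>2 * (1 - v\<^sup>2) * (1 - l\<^sup>2) \<le> p\<^sup>2 * (1 - s\<^sup>2) * (1 - r\<^sup>2)"
  proof -
    have "r\<^sup>2 \<le> l\<^sup>2" using r0' lr' by (intro power_mono) auto
    then have "1 - l\<^sup>2 \<le> 1 - r\<^sup>2" by simp
    then show ?thesis using vs2 s2 by (simp add: mult_left_mono)
  qed
  have K3: "(r - s)\<^sup>2 * A * (1 + c * s)\<^sup>2 = (1 - s\<^sup>2)\<^sup>2 * (c\<^sup>2 * A)"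
  proof -
    have q: "(r - s) * (1 + c * s) = c * (1 - s\<^sup>2)" using rs cs0 by simp
    have "(r - s)\<^sup>2 * A * (1 + c * s)\<^sup>2 = ((r - s) * (1 + c * s))\<^sup>2 * A" by (simp add: algebra_simps power2_eq_square)
    then show ?thesis unfolding q by (simp add: algebra_simps power2_eq_square)
  qed
  have K4: "p\<^sup>2 * (1 - s\<^sup>2) * (1 - r\<^sup>2) * (1 + c * s)\<^sup>2 = (1 - s\<^sup>2)\<^sup>2 * (p\<^sup>2 * (1 - c\<^sup>2))"
  proof -
    have "p\<^sup>2 * (1 - s\<^sup>2) * (1 - r\<^sup>2) * (1 + c * s)\<^sup>2 = p\<^sup>2 * (1 - s\<^sup>2) * ((1 - r\<^sup>2) * (1 + c * s)\<^sup>2)"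
      by (simp add: algebra_simps)
    then show ?thesis unfolding r2 by (simp add: algebra_simps power2_eq_square)
  qed
  have K5: "c\<^sup>2 * A \<ge> p\<^sup>2 * (1 - c\<^sup>2)" using cs by (simp add: A_def algebra_simps)
  have K6: "(r - s)\<^sup>2 * A * (1 + c * s)\<^sup>2 \<ge> p\<^sup>2 * (1 - s\<^sup>2) * (1 - r\<^sup>2) * (1 + c * s)\<^sup>2"
    unfolding K3 K4 using K5 by (simp add: mult_left_mono)
  have K7: "(r - s)\<^sup>2 * A \<ge> p\<^sup>2 * (1 - s\<^sup>2) * (1 - r\<^sup>2)"
    using K6 cs0 by (simp add: mult_le_cancel_right)
  have K: "(l - v)\<^sup>2 * A - p\<^sup>2 * (1 - v\<^sup>2) * (1 - l\<^sup>2) \<ge> 0" using K1 K2 K7 by linarith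
  have sq: "(\<rho> * G * (l - v))\<^sup>2 + (P * G\<^sup>2 * v * (l - v) - p)\<^sup>2 \<le> (l * (P * G\<^sup>2 - p) - P * G\<^sup>2 * v)\<^sup>2"
  proof -
    have "G\<^sup>2 * ((l - v)\<^sup>2 * A - p\<^sup>2 * (1 - v\<^sup>2) * (1 - l\<^sup>2)) \<ge> 0" using K by simp
    then show ?thesis using id GG by simp
  qed
  show "l * (P * G\<^sup>2 - p) - P * G\<^sup>2 * v \<ge> sqrt ((\<rho> * G * (l - v))\<^sup>2 + (P * G\<^sup>2 * v * (l - v) - p)\<^sup>2)"
    using sq x3 by (metis real_sqrt_abs real_sqrt_le_mono abs_of_nonneg)
qed


lemma rc_props:
  fixes \<rho> p :: real
  assumes r0: "\<rho> > 0" and p0: "p > 0"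
  defines "P \<equiv> \<rho> * enthalpy RC_EOS \<rho> p" and "c2 \<equiv> sound_speed_sq RC_EOS \<rho> p"
  shows "P > p" "(P - p)\<^sup>2 - \<rho>\<^sup>2 - p\<^sup>2 \<ge> 0" "c2 \<ge> 0" "c2 * ((P - p)\<^sup>2 - \<rho>\<^sup>2) \<ge> p\<^sup>2"
proof -
  define q where "q = 3 * p + 2 * \<rho>"
  have q0: "q > 0" using r0 p0 by (simp add: q_def)
  have PP: "P = 2 * (6 * p\<^sup>2 + 4 * p * \<rho> + \<rho>\<^sup>2) / q"
  proof -
    have "\<rho> * (X / (\<rho> * q)) = X / q" for X using r0 by simp
    then show ?thesis unfolding P_def q_def by simp
  qed
  have Pp: "P - p = (9 * p\<^sup>2 + 6 * p * \<rho> + 2 * \<rho>\<^sup>2) / q"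
    using q0 unfolding PP by (simp add: q_def field_simps power2_eq_square)
  show "P > p"
  proof -
    have "(9 * p\<^sup>2 + 6 * p * \<rho> + 2 * \<rho>\<^sup>2) / q > 0" using q0 p0 r0 by (intro divide_pos_pos add_pos_pos) auto
    then show ?thesis using Pp by simp
  qed
  have X: "(P - p)\<^sup>2 - \<rho>\<^sup>2 = 3 * p * (3 * p + \<rho>) * (9 * p\<^sup>2 + 9 * p * \<rho> + 4 * \<rho>\<^sup>2) / q\<^sup>2"
  proof -
    have "(P - p)\<^sup>2 - \<rho>\<^sup>2 = ((9 * p\<^sup>2 + 6 * p * \<rho> + 2 * \<rho>\<^sup>2)\<^sup>2 - \<rho>\<^sup>2 * q\<^sup>2) / q\<^sup>2"
      unfolding Pp using q0 by (simp add: field_simps)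
    also have "(9 * p\<^sup>2 + 6 * p * \<rho> + 2 * \<rho>\<^sup>2)\<^sup>2 - \<rho>\<^sup>2 * q\<^sup>2 = 3 * p * (3 * p + \<rho>) * (9 * p\<^sup>2 + 9 * p * \<rho> + 4 * \<rho>\<^sup>2)"
      unfolding q_def by algebra
    finally show ?thesis .
  qed
  show "(P - p)\<^sup>2 - \<rho>\<^sup>2 - p\<^sup>2 \<ge> 0"
  proof -
    have "3 * p * (3 * p + \<rho>) * (9 * p\<^sup>2 + 9 * p * \<rho> + 4 * \<rho>\<^sup>2) - p\<^sup>2 * q\<^sup>2
        = p * (72 * p ^ 3 + 96 * p\<^sup>2 * \<rho> + 59 * p * \<rho>\<^sup>2 + 12 * \<rho> ^ 3)"
      unfolding q_def by algebra
    moreover have "p * (72 * p ^ 3 + 96 * p\<^sup>2 * \<rho> + 59 * p * \<rho>\<^sup>2 + 12 * \<rho> ^ 3) \<ge> 0"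
      using p0 r0 by (intro mult_nonneg_nonneg add_nonneg_nonneg) auto
    ultimately have "3 * p * (3 * p + \<rho>) * (9 * p\<^sup>2 + 9 * p * \<rho> + 4 * \<rho>\<^sup>2) / q\<^sup>2 \<ge> p\<^sup>2"
      using q0 by (simp add: field_simps)
    then show ?thesis using X by simp
  qed
  have N1: "6 * p\<^sup>2 + 4 * p * \<rho> + \<rho>\<^sup>2 > 0" using p0 r0 by (intro add_pos_pos) auto
  have N2: "9 * p\<^sup>2 + 12 * p * \<rho> + 2 * \<rho>\<^sup>2 > 0" using p0 r0 by (intro add_pos_pos) auto
  have CC: "c2 = p * q * (18 * p\<^sup>2 + 24 * p * \<rho> + 5 * \<rho>\<^sup>2) / (3 * (6 * p\<^sup>2 + 4 * p * \<rho> + \<rho>\<^sup>2) * (9 * p\<^sup>2 + 12 * p * \<rho> + 2 * \<rho>\<^sup>2))"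
    by (simp add: c2_def q_def)
  show "c2 \<ge> 0" unfolding CC using p0 q0 r0 N1 N2
    by (intro divide_nonneg_pos mult_nonneg_nonneg add_nonneg_nonneg mult_pos_pos) auto
  show "c2 * ((P - p)\<^sup>2 - \<rho>\<^sup>2) \<ge> p\<^sup>2"
  proof -
    define L where "L = (3 * p + \<rho>) * (18 * p\<^sup>2 + 24 * p * \<rho> + 5 * \<rho>\<^sup>2) * (9 * p\<^sup>2 + 9 * p * \<rho> + 4 * \<rho>\<^sup>2)"
    define R where "R = (6 * p\<^sup>2 + 4 * p * \<rho> + \<rho>\<^sup>2) * (9 * p\<^sup>2 + 12 * p * \<rho> + 2 * \<rho>\<^sup>2) * q"
    have R0: "R > 0" using N1 N2 q0 by (simp add: R_def)
    have e: "c2 * ((P - p)\<^sup>2 - \<rho>\<^sup>2) = p\<^sup>2 * (L / R)"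
    proof -
      define n1 where "n1 = 6 * p\<^sup>2 + 4 * p * \<rho> + \<rho>\<^sup>2"
      define n2 where "n2 = 9 * p\<^sup>2 + 12 * p * \<rho> + 2 * \<rho>\<^sup>2"
      define m1 where "m1 = 18 * p\<^sup>2 + 24 * p * \<rho> + 5 * \<rho>\<^sup>2"
      define m2 where "m2 = 9 * p\<^sup>2 + 9 * p * \<rho> + 4 * \<rho>\<^sup>2"
      define t where "t = 3 * p + \<rho>"
      have "c2 * ((P - p)\<^sup>2 - \<rho>\<^sup>2) = p * q * m1 / (3 * n1 * n2) * (3 * p * t * m2 / q\<^sup>2)"
        unfolding CC X n1_def n2_def m1_def m2_def t_def by simp
      also have "\<dots> = p\<^sup>2 * ((t * m1 * m2) / (n1 * n2 * q))"
        using q0 N1 N2 unfolding n1_def[symmetric] n2_def[symmetric] by (simp add: field_simps power2_eq_square)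
      finally show ?thesis unfolding L_def R_def n1_def n2_def m1_def m2_def t_def by simp
    qed
    have "L - R = 324 * p ^ 5 + 864 * p ^ 4 * \<rho> + 954 * p ^ 3 * \<rho>\<^sup>2 + 558 * p\<^sup>2 * \<rho> ^ 3 + 155 * p * \<rho> ^ 4 + 16 * \<rho> ^ 5"
      unfolding L_def R_def q_def by algebra
    moreover have "324 * p ^ 5 + 864 * p ^ 4 * \<rho> + 954 * p ^ 3 * \<rho>\<^sup>2 + 558 * p\<^sup>2 * \<rho> ^ 3 + 155 * p * \<rho> ^ 4 + 16 * \<rho> ^ 5 \<ge> 0"
      using p0 r0 by (intro mult_nonneg_nonneg add_nonneg_nonneg) auto
    ultimately have "L / R \<ge> 1" using R0 by (simp add: field_simps)
    then have "p\<^sup>2 * (L / R) \<ge> p\<^sup>2 * 1" by (intro mult_left_mono) auto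
    then show ?thesis using e by simp
  qed
qed



lemma id_props:
  fixes \<rho> p g :: real
  assumes r0: "\<rho> > 0" and p0: "p > 0" and g1: "1 < g" and g2: "g \<le> 2"
  defines "P \<equiv> \<rho> * enthalpy (ID_EOS g) \<rho> p" and "c2 \<equiv> sound_speed_sq (ID_EOS g) \<rho> p"
  shows "P > p" "(P - p)\<^sup>2 - \<rho>\<^sup>2 - p\<^sup>2 \<ge> 0" "c2 \<ge> 0" "c2 * ((P - p)\<^sup>2 - \<rho>\<^sup>2) \<ge> p\<^sup>2"
proof -
  define j where "j = 1 / (g - 1)"
  have j1: "j \<ge> 1" using g1 g2 by (simp add: j_def field_simps)
  have gj: "g / (g - 1) = 1 + j" using g1 by (simp add: j_def field_simps)
  have gj2: "g * j = 1 + j" using g1 by (simp add: j_def field_simps)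
  have PP: "P = \<rho> + (1 + j) * p" unfolding P_def using r0 by (simp add: gj field_simps)
  show "P > p" unfolding PP using r0 p0 j1 by (simp add: algebra_simps) (smt (verit) mult_nonneg_nonneg)
  have X: "(P - p)\<^sup>2 - \<rho>\<^sup>2 = p * j * (2 * \<rho> + j * p)" unfolding PP by (simp add: algebra_simps power2_eq_square)
  have jj: "j * j \<ge> 1" using j1 by (metis mult_mono' one_le_numeral order.trans mult_1 zero_le_one)
  show "(P - p)\<^sup>2 - \<rho>\<^sup>2 - p\<^sup>2 \<ge> 0"
  proof -
    have "p * j * (2 * \<rho> + j * p) - p\<^sup>2 = 2 * p * j * \<rho> + p\<^sup>2 * (j * j - 1)" by (simp add: algebra_simps power2_eq_square)
    moreover have "2 * p * j * \<rho> + p\<^sup>2 * (j * j - 1) \<ge> 0" using p0 j1 r0 jj by (intro add_nonneg_nonneg mult_nonneg_nonneg) auto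
    ultimately show ?thesis using X by simp
  qed
  have P0: "P > 0" unfolding PP using r0 p0 j1 by (smt (verit) mult_nonneg_nonneg)
  have CC: "c2 = g * p / P" unfolding c2_def P_def by (simp add: mult.commute)
  show "c2 \<ge> 0" unfolding CC using g1 p0 P0 by simp
  show "c2 * ((P - p)\<^sup>2 - \<rho>\<^sup>2) \<ge> p\<^sup>2"
  proof -
    have "c2 * ((P - p)\<^sup>2 - \<rho>\<^sup>2) = p\<^sup>2 * ((g * j) * (2 * \<rho> + j * p) / P)"
      unfolding CC X using P0 by (simp add: field_simps power2_eq_square)
    also have "\<dots> = p\<^sup>2 * ((1 + j) * (2 * \<rho> + j * p) / P)" unfolding gj2 ..
    also have "\<dots> \<ge> p\<^sup>2 * 1"
    proof -
      have "(1 + j) * (2 * \<rho> + j * p) - P = (1 + 2 * j) * \<rho> + (1 + j) * (j - 1) * p"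
        unfolding PP by (simp add: algebra_simps)
      moreover have "(1 + 2 * j) * \<rho> + (1 + j) * (j - 1) * p \<ge> 0" using j1 r0 p0
        by (intro add_nonneg_nonneg mult_nonneg_nonneg) auto
      ultimately have "(1 + j) * (2 * \<rho> + j * p) / P \<ge> 1" using P0 by (simp add: field_simps)
      then show ?thesis by (intro mult_left_mono) auto
    qed
    finally show ?thesis by simp
  qed
qed

lemma tm_props:
  fixes \<rho> p :: real
  assumes r0: "\<rho> > 0" and p0: "p > 0"
  defines "P \<equiv> \<rho> * enthalpy TM_EOS \<rho> p" and "c2 \<equiv> sound_speed_sq TM_EOS \<rho> p"
  shows "P > p" "(P - p)\<^sup>2 - \<rho>\<^sup>2 - p\<^sup>2 \<ge> 0" "c2 \<ge> 0" "c2 * ((P - p)\<^sup>2 - \<rho>\<^sup>2) \<ge> p\<^sup>2"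
proof -
  define S where "S = sqrt (9 * p\<^sup>2 + 4 * \<rho>\<^sup>2)"
  have S0: "S \<ge> 0" by (simp add: S_def)
  have SS: "S\<^sup>2 = 9 * p\<^sup>2 + 4 * \<rho>\<^sup>2" unfolding S_def by (simp add: add_nonneg_nonneg)
  have sq: "sqrt (9 * p\<^sup>2 / (4 * \<rho>\<^sup>2) + 1) = S / (2 * \<rho>)"
    by (rule real_sqrt_unique) (use r0 SS S0 in \<open>auto simp: field_simps power2_eq_square\<close>)
  have PP: "P = 5 * p / 2 + S / 2" unfolding P_def enthalpy.simps sq using r0 by (simp add: field_simps)
  have Sp: "S \<ge> 3 * p" unfolding S_def by (intro real_le_rsqrt) (simp add: power_mult_distrib)
  show "P > p" unfolding PP using Sp p0 by simp
  have X: "(P - p)\<^sup>2 - \<rho>\<^sup>2 = 3 * p * (3 * p + S) / 2"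
  proof -
    have "(P - p)\<^sup>2 - \<rho>\<^sup>2 = 9 * p\<^sup>2 / 4 + 3 * p * S / 2 + S\<^sup>2 / 4 - \<rho>\<^sup>2" unfolding PP by (simp add: algebra_simps power2_eq_square)
    then show ?thesis unfolding SS by (simp add: field_simps power2_eq_square)
  qed
  show "(P - p)\<^sup>2 - \<rho>\<^sup>2 - p\<^sup>2 \<ge> 0"
  proof -
    have "3 * p * (3 * p + S) / 2 - p\<^sup>2 = 7 * p * p / 2 + 3 * p * S / 2" by (simp add: algebra_simps power2_eq_square)
    moreover have "7 * p * p / 2 + 3 * p * S / 2 \<ge> 0" using p0 S0 by simp
    ultimately show ?thesis using X by simp
  qed
  have D0: "12 * p * S + 36 * p\<^sup>2 + 6 * \<rho>\<^sup>2 > 0" using p0 S0 r0 by (intro add_pos_pos add_nonneg_pos) auto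
  have CC: "c2 = (5 * p * S + 9 * p\<^sup>2) / (12 * p * S + 36 * p\<^sup>2 + 6 * \<rho>\<^sup>2)" unfolding c2_def S_def by simp
  show "c2 \<ge> 0" unfolding CC using p0 S0 D0 by simp
  show "c2 * ((P - p)\<^sup>2 - \<rho>\<^sup>2) \<ge> p\<^sup>2"
  proof -
    have "(5 * p * S + 9 * p\<^sup>2) * (3 * p * (3 * p + S) / 2) - p\<^sup>2 * (12 * p * S + 36 * p\<^sup>2 + 6 * \<rho>\<^sup>2)
        = p\<^sup>2 * (24 * p * S + 72 * p\<^sup>2 + 24 * \<rho>\<^sup>2) + 15 * p\<^sup>2 / 2 * (S\<^sup>2 - 9 * p\<^sup>2 - 4 * \<rho>\<^sup>2)"
      by (simp add: algebra_simps power2_eq_square)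
    also have "\<dots> \<ge> 0" unfolding SS using p0 S0 by simp
    finally have "(5 * p * S + 9 * p\<^sup>2) * (3 * p * (3 * p + S) / 2) \<ge> p\<^sup>2 * (12 * p * S + 36 * p\<^sup>2 + 6 * \<rho>\<^sup>2)" by simp
    then show ?thesis unfolding CC X using D0 by (simp add: field_simps)
  qed
qed

lemma ip_props:
  fixes \<rho> p :: real
  assumes r0: "\<rho> > 0" and p0: "p > 0"
  defines "P \<equiv> \<rho> * enthalpy IP_EOS \<rho> p" and "c2 \<equiv> sound_speed_sq IP_EOS \<rho> p"
  shows "P > p" "(P - p)\<^sup>2 - \<rho>\<^sup>2 - p\<^sup>2 \<ge> 0" "c2 \<ge> 0" "c2 * ((P - p)\<^sup>2 - \<rho>\<^sup>2) \<ge> p\<^sup>2"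
proof -
  define S where "S = sqrt (4 * p\<^sup>2 + \<rho>\<^sup>2)"
  have S0: "S \<ge> 0" by (simp add: S_def)
  have SS: "S\<^sup>2 = 4 * p\<^sup>2 + \<rho>\<^sup>2" unfolding S_def by (simp add: add_nonneg_nonneg)
  have sq: "sqrt (4 * p\<^sup>2 / \<rho>\<^sup>2 + 1) = S / \<rho>"
    by (rule real_sqrt_unique) (use r0 SS S0 in \<open>auto simp: field_simps power2_eq_square\<close>)
  have PP: "P = 2 * p + S" unfolding P_def enthalpy.simps sq using r0 by (simp add: field_simps)
  show "P > p" unfolding PP using S0 p0 by simp
  have X: "(P - p)\<^sup>2 - \<rho>\<^sup>2 = 5 * p\<^sup>2 + 2 * p * S"
  proof -
    have "(P - p)\<^sup>2 - \<rho>\<^sup>2 = p\<^sup>2 + 2 * p * S + S\<^sup>2 - \<rho>\<^sup>2" unfolding PP by (simp add: algebra_simps power2_eq_square)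
    then show ?thesis unfolding SS by (simp add: algebra_simps power2_eq_square)
  qed
  show "(P - p)\<^sup>2 - \<rho>\<^sup>2 - p\<^sup>2 \<ge> 0" unfolding X using p0 S0 by simp
  have D0: "4 * p * S + 4 * p\<^sup>2 + \<rho>\<^sup>2 > 0" using p0 S0 r0 by (intro add_pos_pos add_nonneg_pos) auto
  have CC: "c2 = (2 * p * S) / (4 * p * S + 4 * p\<^sup>2 + \<rho>\<^sup>2)" unfolding c2_def S_def by simp
  show "c2 \<ge> 0" unfolding CC using p0 S0 D0 by simp
  show "c2 * ((P - p)\<^sup>2 - \<rho>\<^sup>2) \<ge> p\<^sup>2"
  proof -
    have "(2 * p * S) * (5 * p\<^sup>2 + 2 * p * S) - p\<^sup>2 * (4 * p * S + 4 * p\<^sup>2 + \<rho>\<^sup>2)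
        = 6 * p ^ 3 * S + 12 * p ^ 4 + 3 * p\<^sup>2 * \<rho>\<^sup>2 + 4 * p\<^sup>2 * (S\<^sup>2 - 4 * p\<^sup>2 - \<rho>\<^sup>2)"
      by (simp add: algebra_simps power2_eq_square power3_eq_cube power4_eq_xxxx)
    also have "\<dots> \<ge> 0" unfolding SS using p0 S0 by simp
    finally have "(2 * p * S) * (5 * p\<^sup>2 + 2 * p * S) \<ge> p\<^sup>2 * (4 * p * S + 4 * p\<^sup>2 + \<rho>\<^sup>2)" by simp
    then show ?thesis unfolding CC X using D0 by (simp add: field_simps)
  qed
qed



lemma Psi_deriv:
  fixes H :: "real \<Rightarrow> real"
  assumes hd: "(H has_real_derivative d) (at t)" and Hp: "H t > 0"
  shows "((\<lambda>t. sqrt ((H t)\<^sup>2 + a\<^sup>2) - t * H t / sqrt ((H t)\<^sup>2 + a\<^sup>2)) has_real_derivative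
     (a\<^sup>2 * (d * (H t - t) - H t) + (H t)^3 * (d - 1)) / (sqrt ((H t)\<^sup>2 + a\<^sup>2))^3) (at t)"
proof -
  define Y where "Y = sqrt ((H t)\<^sup>2 + a\<^sup>2)"
  have pos: "(H t)\<^sup>2 + a\<^sup>2 > 0" using Hp by (simp add: add_pos_nonneg)
  have Y0: "Y > 0" using pos by (simp add: Y_def)
  have YY: "Y\<^sup>2 = (H t)\<^sup>2 + a\<^sup>2" using pos by (simp add: Y_def)
  have u: "((\<lambda>t. (H t)\<^sup>2 + a\<^sup>2) has_real_derivative 2 * H t * d) (at t)"
    by (auto intro!: derivative_eq_intros hd)
  have Yd: "((\<lambda>t. sqrt ((H t)\<^sup>2 + a\<^sup>2)) has_real_derivative (inverse Y / 2 * (2 * H t * d))) (at t)"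
    unfolding Y_def by (rule DERIV_chain2[OF DERIV_real_sqrt[OF pos] u])
  have Q: "((\<lambda>t. t * H t / sqrt ((H t)\<^sup>2 + a\<^sup>2)) has_real_derivative
     (((1 * H t + d * t) * Y - t * H t * (inverse Y / 2 * (2 * H t * d))) / (Y * Y))) (at t)"
    unfolding Y_def by (rule DERIV_divide[OF DERIV_mult[OF DERIV_ident hd] Yd[unfolded Y_def]]) (use Hp in simp)
  have D: "((\<lambda>t. sqrt ((H t)\<^sup>2 + a\<^sup>2) - t * H t / sqrt ((H t)\<^sup>2 + a\<^sup>2)) has_real_derivative
     (inverse Y / 2 * (2 * H t * d) - ((1 * H t + d * t) * Y - t * H t * (inverse Y / 2 * (2 * H t * d))) / (Y * Y))) (at t)"
    by (rule DERIV_diff[OF Yd Q])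
  have "inverse Y / 2 * (2 * H t * d) - ((1 * H t + d * t) * Y - t * H t * (inverse Y / 2 * (2 * H t * d))) / (Y * Y)
      = (Y\<^sup>2 * (H t * d - H t - t * d) + t * (H t)\<^sup>2 * d) / Y ^ 3"
    using Y0 by (simp add: field_simps power2_eq_square power3_eq_cube)
  also have "\<dots> = (a\<^sup>2 * (d * (H t - t) - H t) + (H t)^3 * (d - 1)) / Y ^ 3"
    unfolding YY by (simp add: algebra_simps power2_eq_square power3_eq_cube)
  finally show ?thesis using D unfolding Y_def by simp
qed

definition Psi :: "(real \<Rightarrow> real) \<Rightarrow> real \<Rightarrow> real \<Rightarrow> real" where
  "Psi H a x = sqrt ((H x)\<^sup>2 + a\<^sup>2) - x * H x / sqrt ((H x)\<^sup>2 + a\<^sup>2)"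

lemma Psi_mono:
  fixes H :: "real \<Rightarrow> real"
  assumes Hder: "\<And>x. x > 0 \<Longrightarrow> \<exists>d. (H has_real_derivative d) (at x) \<and> d * (H x - x) > H x"
    and Hge: "\<And>x. x \<ge> 0 \<Longrightarrow> H x \<ge> 1 + x"
    and xy: "0 < x" "x < y"
  shows "Psi H a x < Psi H a y"
  unfolding Psi_def
proof (rule DERIV_pos_imp_increasing[OF xy(2)])
  fix t assume t: "x \<le> t" "t \<le> y"
  then have t0: "t > 0" using xy by simp
  obtain d where hd: "(H has_real_derivative d) (at t)" and dc: "d * (H t - t) > H t" using Hder[OF t0] by blast
  have Ht: "H t \<ge> 1 + t" using Hge t0 by simp
  have Hp: "H t > 0" using Ht t0 by simp
  have d1: "d > 1"
  proof (rule ccontr)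
    assume "\<not> d > 1"
    then have "d * (H t - t) \<le> 1 * (H t - t)" using Ht t0 by (intro mult_right_mono) auto
    then show False using dc t0 by simp
  qed
  define Y where "Y = sqrt ((H t)\<^sup>2 + a\<^sup>2)"
  have Y0: "Y > 0" using Hp by (simp add: Y_def add_pos_nonneg)
  have "a\<^sup>2 * (d * (H t - t) - H t) + (H t)^3 * (d - 1) > 0"
    using dc d1 Hp by (intro add_nonneg_pos mult_nonneg_nonneg mult_pos_pos) auto
  then have "(a\<^sup>2 * (d * (H t - t) - H t) + (H t)^3 * (d - 1)) / Y ^ 3 > 0" using Y0 by simp
  then show "\<exists>y. ((\<lambda>t. sqrt ((H t)\<^sup>2 + a\<^sup>2) - t * H t / sqrt ((H t)\<^sup>2 + a\<^sup>2)) has_real_derivative y) (at t) \<and> 0 < y"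
    using Psi_deriv[OF hd Hp, of a] unfolding Y_def by blast
qed

lemma Psi_exists:
  fixes H :: "real \<Rightarrow> real"
  assumes Hcont: "continuous_on {0..} H" and H0: "H 0 = 1"
    and Hge: "\<And>x. x \<ge> 0 \<Longrightarrow> H x \<ge> 1 + x"
    and H34: "\<And>x. x \<ge> 0 \<Longrightarrow> 3 * H x \<ge> 4 * x"
    and ab: "b > sqrt (1 + a\<^sup>2)"
  shows "\<exists>x>0. Psi H a x = b"
proof -
  have b0: "b > 0" using ab using ab by (smt (verit) real_sqrt_ge_zero zero_le_power2)
  define M where "M = 4 * b + 4 * \<bar>a\<bar>"
  have M0: "M > 0" using b0 by (simp add: M_def add_pos_nonneg)
  have P0: "Psi H a 0 \<le> b" using ab H0 by (simp add: Psi_def)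
  have PM: "b \<le> Psi H a M"
  proof -
    define h where "h = H M"
    have hM: "h \<ge> 1 + M" using Hge M0 by (simp add: h_def)
    have h34: "3 * h \<ge> 4 * M" using H34 M0 by (simp add: h_def)
    have h0: "h > 0" using hM M0 by simp
    define Y where "Y = sqrt (h\<^sup>2 + a\<^sup>2)"
    have Y0: "Y > 0" using h0 by (simp add: Y_def add_pos_nonneg)
    have YY: "Y\<^sup>2 = h\<^sup>2 + a\<^sup>2" by (simp add: Y_def)
    have Yle: "Y \<le> h + \<bar>a\<bar>" unfolding Y_def
      by (rule real_sqrt_le_iff[THEN iffD2, of _ "(h + \<bar>a\<bar>)\<^sup>2", unfolded real_sqrt_abs, THEN order_trans])
         (use h0 in \<open>auto simp: power2_eq_square algebra_simps\<close>)
    have PsiM0: "Psi H a M = Y - M * h / Y" by (simp add: Psi_def Y_def h_def)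
    have PsiM: "Psi H a M = (Y\<^sup>2 - M * h) / Y" unfolding PsiM0 using Y0 by (simp add: field_simps power2_eq_square)
    have "b * Y \<le> b * (h + \<bar>a\<bar>)" using Yle b0 by simp
    also have "\<dots> \<le> h * h / 4"
    proof -
      have "h * (4 * b + 4 * \<bar>a\<bar>) \<le> h * h" using hM h0 unfolding M_def by (intro mult_left_mono) auto
      moreover have "b * \<bar>a\<bar> \<le> h * \<bar>a\<bar>" using hM M_def b0 by (intro mult_right_mono) auto
      ultimately show ?thesis by (simp add: algebra_simps)
    qed
    also have "\<dots> \<le> Y\<^sup>2 - M * h"
    proof -
      have "h * (h - M) \<ge> h * (h / 4)" using h34 h0 by (intro mult_left_mono) auto
      moreover have "Y\<^sup>2 - M * h = h * (h - M) + a\<^sup>2" unfolding YY by (simp add: algebra_simps power2_eq_square)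
      moreover have "h * (h / 4) = h * h / 4" by simp
      ultimately show ?thesis using zero_le_power2[of a] by linarith
    qed
    finally have "b * Y \<le> Y\<^sup>2 - M * h" .
    then show ?thesis unfolding PsiM using Y0 by (simp add: field_simps)
  qed
  have cont: "continuous_on {0..M} (Psi H a)"
  proof -
    have cH: "continuous_on {0..M} H" using Hcont by (rule continuous_on_subset) auto
    have nz: "\<forall>x\<in>{0..M}. sqrt ((H x)\<^sup>2 + a\<^sup>2) \<noteq> 0"
    proof
      fix x assume "x \<in> {0..M}"
      then have "H x \<ge> 1" using Hge[of x] by auto
      then show "sqrt ((H x)\<^sup>2 + a\<^sup>2) \<noteq> 0" by (simp add: add_nonneg_eq_0_iff)
    qed
    show ?thesis unfolding Psi_def[abs_def]
      by (intro continuous_intros cH nz)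
  qed
  have "\<exists>x. 0 \<le> x \<and> x \<le> M \<and> Psi H a x = b"
    by (rule IVT'[OF P0 PM _ cont]) (use M0 in simp)
  then obtain x where x: "0 \<le> x" "x \<le> M" "Psi H a x = b" by blast
  have "x \<noteq> 0" using x(3) ab H0 by (auto simp: Psi_def)
  then have "x > 0" using x by simp
  then show ?thesis using x(3) by blast
qed


lemma cons_of_eq: "cons_of e \<rho> v p = (\<rho> * (1 / sqrt (1 - v\<^sup>2)), \<rho> * enthalpy e \<rho> p * (1 / sqrt (1 - v\<^sup>2))\<^sup>2 * v,
    \<rho> * enthalpy e \<rho> p * (1 / sqrt (1 - v\<^sup>2))\<^sup>2 - p)"
  by (simp add: cons_of_def Let_def)

lemma prim_char:
  fixes H :: "real \<Rightarrow> real"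
  assumes Heq: "\<And>\<rho> p. \<rho> > 0 \<Longrightarrow> p > 0 \<Longrightarrow> enthalpy e \<rho> p = H (p / \<rho>)"
    and Hcont: "continuous_on {0..} H" and H0: "H 0 = 1"
    and Hge: "\<And>x. x \<ge> 0 \<Longrightarrow> H x \<ge> 1 + x"
    and H34: "\<And>x. x \<ge> 0 \<Longrightarrow> 3 * H x \<ge> 4 * x"
    and Hder: "\<And>x. x > 0 \<Longrightarrow> \<exists>d. (H has_real_derivative d) (at x) \<and> d * (H x - x) > H x"
    and u: "(D, m, E) \<in> Uad"
  shows "\<exists>\<rho> v p. prim e (D, m, E) = (\<rho>, v, p) \<and> \<rho> > 0 \<and> p > 0 \<and> \<bar>v\<bar> < 1 \<and> cons_of e \<rho> v p = (D, m, E)"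
proof -
  from u have D0: "D > 0" and E0: "E > sqrt (D\<^sup>2 + m\<^sup>2)" by (auto simp: Uad_def)
  define a where "a = m / D"
  define b where "b = E / D"
  have "sqrt (D\<^sup>2 + m\<^sup>2) = D * sqrt (1 + a\<^sup>2)"
  proof -
    have "D\<^sup>2 + m\<^sup>2 = D\<^sup>2 * (1 + a\<^sup>2)" using D0 by (simp add: a_def field_simps)
    then show ?thesis using D0 by (simp add: real_sqrt_mult)
  qed
  then have ab: "b > sqrt (1 + a\<^sup>2)" using E0 D0 by (simp add: b_def field_simps)
  obtain \<theta> where th0: "\<theta> > 0" and ps: "Psi H a \<theta> = b" using Psi_exists[OF Hcont H0 Hge H34 ab] by blast
  define h where "h = H \<theta>"
  define Y where "Y = sqrt (h\<^sup>2 + a\<^sup>2)"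
  have h1: "h \<ge> 1 + \<theta>" using Hge th0 by (simp add: h_def)
  have h0: "h > 0" using h1 th0 by simp
  have Y0: "Y > 0" using h0 by (simp add: Y_def add_pos_nonneg)
  have YY: "Y\<^sup>2 = h\<^sup>2 + a\<^sup>2" by (simp add: Y_def)
  have aY: "\<bar>a\<bar> < Y"
  proof -
    have "a\<^sup>2 < Y\<^sup>2" using YY h0 by simp
    then show ?thesis using Y0 by (metis abs_of_pos power2_less_imp_less abs_ge_zero abs_power2 power2_abs)
  qed
  have psY: "Y - \<theta> * h / Y = b" using ps by (simp add: Psi_def Y_def h_def)
  define \<rho>0 where "\<rho>0 = D * h / Y"
  define v0 where "v0 = a / Y"
  define p0 where "p0 = \<rho>0 * \<theta>"
  have r0: "\<rho>0 > 0" using D0 h0 Y0 by (simp add: \<rho>0_def)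
  have pp0: "p0 > 0" using r0 th0 by (simp add: p0_def)
  have v01: "\<bar>v0\<bar> < 1"
  proof -
    have "\<bar>v0\<bar> = \<bar>a\<bar> / Y" using Y0 by (simp add: v0_def abs_divide)
    then show ?thesis using aY Y0 by simp
  qed
  have sq: "sqrt (1 - v0\<^sup>2) = h / Y"
  proof (rule real_sqrt_unique)
    have "1 - v0\<^sup>2 = (Y\<^sup>2 - a\<^sup>2) / Y\<^sup>2" using Y0 by (simp add: v0_def diff_divide_distrib power_divide)
    then show "(h / Y)\<^sup>2 = 1 - v0\<^sup>2" using YY by (simp add: power_divide)
    show "0 \<le> h / Y" using h0 Y0 by simp
  qed
  have en0: "enthalpy e \<rho>0 p0 = h" using Heq[OF r0 pp0] r0 by (simp add: p0_def h_def)
  have ex: "\<rho>0 > 0 \<and> p0 > 0 \<and> \<bar>v0\<bar> < 1 \<and> cons_of e \<rho>0 v0 p0 = (D, m, E)"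
  proof (intro conjI r0 pp0 v01)
    have c1: "\<rho>0 * (1 / (h / Y)) = D" using h0 Y0 by (simp add: \<rho>0_def)
    have c2: "\<rho>0 * h * (1 / (h / Y))\<^sup>2 * v0 = m" using h0 Y0 D0 by (simp add: \<rho>0_def v0_def a_def field_simps power2_eq_square)
    have c3: "\<rho>0 * h * (1 / (h / Y))\<^sup>2 - p0 = E"
    proof -
      have "\<rho>0 * h * (1 / (h / Y))\<^sup>2 - p0 = D * (Y - \<theta> * h / Y)" using h0 Y0 by (simp add: \<rho>0_def p0_def field_simps power2_eq_square)
      also have "\<dots> = E" using psY D0 by (simp add: b_def)
      finally show ?thesis .
    qed
    show "cons_of e \<rho>0 v0 p0 = (D, m, E)" unfolding cons_of_eq sq en0 using c1 c2 c3 by simp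
  qed
  have uniq: "(\<rho>', v', p') = (\<rho>0, v0, p0)"
    if H1: "\<rho>' > 0" "p' > 0" "\<bar>v'\<bar> < 1" "cons_of e \<rho>' v' p' = (D, m, E)" for \<rho>' v' p'
  proof -
    define G where "G = 1 / sqrt (1 - v'\<^sup>2)"
    define \<theta>' where "\<theta>' = p' / \<rho>'"
    define h' where "h' = enthalpy e \<rho>' p'"
    have vv: "1 - v'\<^sup>2 > 0" using H1(3) by (simp add: abs_square_less_1)
    have G0: "G > 0" using vv by (simp add: G_def)
    have GG: "G\<^sup>2 * (1 - v'\<^sup>2) = 1" using vv by (simp add: G_def power_divide)
    have GG2: "G\<^sup>2 = 1 + G\<^sup>2 * v'\<^sup>2" using GG by (simp add: algebra_simps)
    have th'0: "\<theta>' > 0" using H1 by (simp add: \<theta>'_def)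
    have hh': "h' = H \<theta>'" using Heq[OF H1(1) H1(2)] by (simp add: h'_def \<theta>'_def)
    have h'0: "h' > 0" using Hge[of \<theta>'] th'0 hh' by simp
    have eqs: "D = \<rho>' * G" "m = \<rho>' * h' * G\<^sup>2 * v'" "E = \<rho>' * h' * G\<^sup>2 - p'"
      using H1(4) unfolding cons_of_eq G_def[symmetric] h'_def[symmetric] by auto
    have aa: "a = h' * G * v'" using eqs H1 G0 by (simp add: a_def power2_eq_square)
    have bb: "b = h' * G - \<theta>' / G" using eqs H1 G0 by (simp add: b_def \<theta>'_def field_simps power2_eq_square)
    have Y': "sqrt (h'\<^sup>2 + a\<^sup>2) = h' * G"
    proof (rule real_sqrt_unique)
      show "(h' * G)\<^sup>2 = h'\<^sup>2 + a\<^sup>2" unfolding aa power_mult_distrib using GG2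
        by (metis (no_types, lifting) distrib_left mult.commute mult.left_commute mult_1_right)
      show "0 \<le> h' * G" using h'0 G0 by simp
    qed
    have ps': "Psi H a \<theta>' = b" unfolding Psi_def hh'[symmetric] Y' bb using h'0 G0 by simp
    have tt: "\<theta>' = \<theta>"
    proof (rule ccontr)
      assume "\<theta>' \<noteq> \<theta>"
      then consider "\<theta>' < \<theta>" | "\<theta> < \<theta>'" by linarith
      then show False
      proof cases
        case 1 then show ?thesis using Psi_mono[OF Hder Hge th'0 1, of a] ps ps' by simp
      next
        case 2 then show ?thesis using Psi_mono[OF Hder Hge th0 2, of a] ps ps' by simp
      qed
    qed
    have hh: "h' = h" using hh' tt by (simp add: h_def)
    have YG: "Y = h * G" using Y' hh by (simp add: Y_def)
    have "v' = v0" using aa YG hh h0 G0 by (simp add: v0_def)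
    moreover have "\<rho>' = \<rho>0" using eqs(1) YG h0 G0 by (simp add: \<rho>0_def)
    moreover have "p' = p0" using tt \<open>\<rho>' = \<rho>0\<close> H1 by (simp add: p0_def \<theta>'_def field_simps)
    ultimately show ?thesis by simp
  qed
  have "prim e (D, m, E) = (\<rho>0, v0, p0)"
    unfolding prim_def
  proof (rule the_equality)
    show "case (\<rho>0, v0, p0) of (\<rho>, v, p) \<Rightarrow> \<rho> > 0 \<and> p > 0 \<and> \<bar>v\<bar> < 1 \<and> cons_of e \<rho> v p = (D, m, E)"
      using ex by simp
    fix x assume "case x of (\<rho>, v, p) \<Rightarrow> \<rho> > 0 \<and> p > 0 \<and> \<bar>v\<bar> < 1 \<and> cons_of e \<rho> v p = (D, m, E)"
    then show "x = (\<rho>0, v0, p0)" using uniq by (cases x) auto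
  qed
  then show ?thesis using ex by blast
qed


definition HH :: "eos \<Rightarrow> real \<Rightarrow> real" where "HH e x = enthalpy e 1 x"

lemma HH_props:
  assumes ok: "eos_ok e"
  shows "\<And>\<rho> p. \<rho> > 0 \<Longrightarrow> p > 0 \<Longrightarrow> enthalpy e \<rho> p = HH e (p / \<rho>)"
    and "continuous_on {0..} (HH e)" and "HH e 0 = 1"
    and "\<And>x. x \<ge> 0 \<Longrightarrow> HH e x \<ge> 1 + x"
    and "\<And>x. x \<ge> 0 \<Longrightarrow> 3 * HH e x \<ge> 4 * x"
    and "\<And>x. x > 0 \<Longrightarrow> \<exists>d. (HH e has_real_derivative d) (at x) \<and> d * (HH e x - x) > HH e x"
proof -
  have "(\<forall>\<rho> p. \<rho> > 0 \<longrightarrow> p > 0 \<longrightarrow> enthalpy e \<rho> p = HH e (p / \<rho>))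
    \<and> continuous_on {0..} (HH e) \<and> HH e 0 = 1
    \<and> (\<forall>x. x \<ge> 0 \<longrightarrow> HH e x \<ge> 1 + x)
    \<and> (\<forall>x. x \<ge> 0 \<longrightarrow> 3 * HH e x \<ge> 4 * x)
    \<and> (\<forall>x. x > 0 \<longrightarrow> (\<exists>d. (HH e has_real_derivative d) (at x) \<and> d * (HH e x - x) > HH e x))"
  proof (cases e)
    case (ID_EOS g)
    have g1: "1 < g" "g \<le> 2" using ok by (auto simp: eos_ok_def ID_EOS)
    define j where "j = 1 / (g - 1)"
    have j1: "j \<ge> 1" using g1 by (simp add: j_def field_simps)
    have gj: "g / (g - 1) = 1 + j" using g1 by (simp add: j_def field_simps)
    have HHe: "HH e = (\<lambda>x. 1 + (1 + j) * x)" by (rule ext) (simp add: HH_def ID_EOS gj)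
    show ?thesis unfolding HHe
    proof (intro conjI allI impI)
      fix \<rho> p :: real assume "\<rho> > 0" "p > 0"
      then show "enthalpy e \<rho> p = 1 + (1 + j) * (p / \<rho>)" by (simp add: ID_EOS gj)
    next
      show "continuous_on {0..} (\<lambda>x. 1 + (1 + j) * x)" by (intro continuous_intros)
    next
      show "1 + (1 + j) * 0 = (1::real)" by simp
    next
      fix x :: real assume x: "x \<ge> 0"
      then show "1 + (1 + j) * x \<ge> 1 + x" using j1 by (simp add: algebra_simps)
      show "3 * (1 + (1 + j) * x) \<ge> 4 * x" using x j1 mult_right_mono[OF j1 x] by (simp add: algebra_simps)
    next
      fix x :: real assume x: "x > 0"
      have der: "((\<lambda>x. 1 + (1 + j) * x) has_real_derivative (1 + j)) (at x)"
        by (auto intro!: derivative_eq_intros)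
      have "(1 + j) * (1 + (1 + j) * x - x) - (1 + (1 + j) * x) = j + (j * j - 1) * x" by (simp add: algebra_simps)
      moreover have "j + (j * j - 1) * x > 0" using j1 x
        by (intro add_pos_nonneg mult_nonneg_nonneg) (auto simp: mult_mono' intro: order.trans[OF _ mult_mono'[of 1 j 1 j]])
      ultimately show "\<exists>d. ((\<lambda>x. 1 + (1 + j) * x) has_real_derivative d) (at x) \<and> d * (1 + (1 + j) * x - x) > 1 + (1 + j) * x"
        using der by (intro exI[of _ "1 + j"]) simp
    qed
  next
    case TM_EOS
    have HHe: "HH e = (\<lambda>x. 5 * x / 2 + sqrt (9 * x\<^sup>2 / 4 + 1))" by (rule ext) (simp add: HH_def TM_EOS)
    show ?thesis unfolding HHe
    proof (intro conjI allI impI)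
      fix \<rho> p :: real assume "\<rho> > 0" "p > 0"
      then show "enthalpy e \<rho> p = 5 * (p / \<rho>) / 2 + sqrt (9 * (p / \<rho>)\<^sup>2 / 4 + 1)" by (simp add: TM_EOS power_divide mult.commute)
    next
      show "continuous_on {0..} (\<lambda>x. 5 * x / 2 + sqrt (9 * x\<^sup>2 / 4 + 1))" by (intro continuous_intros) auto
    next
      show "5 * 0 / 2 + sqrt (9 * 0\<^sup>2 / 4 + 1) = (1::real)" by simp
    next
      fix x :: real assume x: "x \<ge> 0"
      have s1: "sqrt (9 * x\<^sup>2 / 4 + 1) \<ge> 1" by simp
      then show "5 * x / 2 + sqrt (9 * x\<^sup>2 / 4 + 1) \<ge> 1 + x" using x by linarith
      show "3 * (5 * x / 2 + sqrt (9 * x\<^sup>2 / 4 + 1)) \<ge> 4 * x"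
        using x s1 distrib_left[of 3 "5 * x / 2" "sqrt (9 * x\<^sup>2 / 4 + 1)"] by linarith
    next
      fix x :: real assume x: "x > 0"
      define S where "S = sqrt (9 * x\<^sup>2 / 4 + 1)"
      have S1: "S \<ge> 1" by (simp add: S_def)
      have pos: "9 * x\<^sup>2 / 4 + 1 > 0" by (simp add: add_nonneg_pos)
      have der: "((\<lambda>x. 5 * x / 2 + sqrt (9 * x\<^sup>2 / 4 + 1)) has_real_derivative (5 / 2 + inverse S / 2 * (9 * x / 2))) (at x)"
      proof -
        have u: "((\<lambda>x. 9 * x\<^sup>2 / 4 + 1) has_real_derivative 9 * x / 2) (at x)" by (auto intro!: derivative_eq_intros)
        have sd: "((\<lambda>x. sqrt (9 * x\<^sup>2 / 4 + 1)) has_real_derivative inverse S / 2 * (9 * x / 2)) (at x)"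
          unfolding S_def by (rule DERIV_chain2[OF DERIV_real_sqrt[OF pos] u])
        have l: "((\<lambda>x. 5 * x / 2) has_real_derivative 5 / 2) (at x)" by (auto intro!: derivative_eq_intros)
        show ?thesis by (rule DERIV_add[OF l sd])
      qed
      have d1: "5 / 2 + inverse S / 2 * (9 * x / 2) \<ge> 5 / 2" using S1 x by simp
      have "(5 / 2 + inverse S / 2 * (9 * x / 2)) * (5 * x / 2 + S - x) \<ge> 5 / 2 * (5 * x / 2 + S - x)"
        using d1 S1 x by (intro mult_right_mono) auto
      moreover have "5 / 2 * (5 * x / 2 + S - x) > 5 * x / 2 + S" using S1 x by simp
      ultimately show "\<exists>d. ((\<lambda>x. 5 * x / 2 + sqrt (9 * x\<^sup>2 / 4 + 1)) has_real_derivative d) (at x) \<and>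
          d * (5 * x / 2 + sqrt (9 * x\<^sup>2 / 4 + 1) - x) > 5 * x / 2 + sqrt (9 * x\<^sup>2 / 4 + 1)"
        using der unfolding S_def[symmetric] by (intro exI[of _ "5 / 2 + inverse S / 2 * (9 * x / 2)"]) simp
    qed
  next
    case IP_EOS
    have HHe: "HH e = (\<lambda>x. 2 * x + sqrt (4 * x\<^sup>2 + 1))" by (rule ext) (simp add: HH_def IP_EOS)
    show ?thesis unfolding HHe
    proof (intro conjI allI impI)
      fix \<rho> p :: real assume "\<rho> > 0" "p > 0"
      then show "enthalpy e \<rho> p = 2 * (p / \<rho>) + sqrt (4 * (p / \<rho>)\<^sup>2 + 1)" by (simp add: IP_EOS power_divide)
    next
      show "continuous_on {0..} (\<lambda>x. 2 * x + sqrt (4 * x\<^sup>2 + 1))" by (intro continuous_intros)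
    next
      show "2 * 0 + sqrt (4 * 0\<^sup>2 + 1) = (1::real)" by simp
    next
      fix x :: real assume x: "x \<ge> 0"
      have s1: "sqrt (4 * x\<^sup>2 + 1) \<ge> 1" by simp
      then show "2 * x + sqrt (4 * x\<^sup>2 + 1) \<ge> 1 + x" using x by linarith
      show "3 * (2 * x + sqrt (4 * x\<^sup>2 + 1)) \<ge> 4 * x"
        using x s1 distrib_left[of 3 "2 * x" "sqrt (4 * x\<^sup>2 + 1)"] by linarith
    next
      fix x :: real assume x: "x > 0"
      define S where "S = sqrt (4 * x\<^sup>2 + 1)"
      have S1: "S \<ge> 1" by (simp add: S_def)
      have pos: "4 * x\<^sup>2 + 1 > 0" by (simp add: add_nonneg_pos)
      have der: "((\<lambda>x. 2 * x + sqrt (4 * x\<^sup>2 + 1)) has_real_derivative (2 + inverse S / 2 * (8 * x))) (at x)"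
      proof -
        have u: "((\<lambda>x. 4 * x\<^sup>2 + 1) has_real_derivative 8 * x) (at x)" by (auto intro!: derivative_eq_intros)
        have sd: "((\<lambda>x. sqrt (4 * x\<^sup>2 + 1)) has_real_derivative inverse S / 2 * (8 * x)) (at x)"
          unfolding S_def by (rule DERIV_chain2[OF DERIV_real_sqrt[OF pos] u])
        have l: "((\<lambda>x. 2 * x) has_real_derivative 2) (at x)" by (auto intro!: derivative_eq_intros)
        show ?thesis by (rule DERIV_add[OF l sd])
      qed
      have d1: "2 + inverse S / 2 * (8 * x) \<ge> 2" using S1 x by simp
      have "(2 + inverse S / 2 * (8 * x)) * (2 * x + S - x) \<ge> 2 * (2 * x + S - x)"
        using d1 S1 x by (intro mult_right_mono) auto
      moreover have "2 * (2 * x + S - x) > 2 * x + S" using S1 x by simp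
      ultimately show "\<exists>d. ((\<lambda>x. 2 * x + sqrt (4 * x\<^sup>2 + 1)) has_real_derivative d) (at x) \<and>
          d * (2 * x + sqrt (4 * x\<^sup>2 + 1) - x) > 2 * x + sqrt (4 * x\<^sup>2 + 1)"
        using der unfolding S_def[symmetric] by (intro exI[of _ "2 + inverse S / 2 * (8 * x)"]) simp
    qed
  next
    case RC_EOS
    have HHe: "HH e = (\<lambda>x. 2 * (6 * x\<^sup>2 + 4 * x + 1) / (3 * x + 2))" by (rule ext) (simp add: HH_def RC_EOS)
    show ?thesis unfolding HHe
    proof (intro conjI allI impI)
      fix \<rho> p :: real assume r: "\<rho> > 0" "p > 0"
      have q1: "3 * (p / \<rho>) + 2 \<noteq> 0" using r by (smt (verit) divide_pos_pos)
      have q2: "3 * p + 2 * \<rho> \<noteq> 0" using r by simp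
      have "2 * (6 * (p / \<rho>)\<^sup>2 + 4 * (p / \<rho>) + 1) = 2 * (6 * p\<^sup>2 + 4 * p * \<rho> + \<rho>\<^sup>2) / \<rho>\<^sup>2"
        using r by (simp add: field_simps power2_eq_square)
      moreover have "3 * (p / \<rho>) + 2 = (3 * p + 2 * \<rho>) / \<rho>" using r by (simp add: field_simps)
      ultimately show "enthalpy e \<rho> p = 2 * (6 * (p / \<rho>)\<^sup>2 + 4 * (p / \<rho>) + 1) / (3 * (p / \<rho>) + 2)"
        using r q2 by (simp add: RC_EOS power2_eq_square)
    next
      show "continuous_on {0..} (\<lambda>x. 2 * (6 * x\<^sup>2 + 4 * x + 1) / (3 * x + 2 :: real))"
        by (intro continuous_intros) auto
    next
      show "2 * (6 * 0\<^sup>2 + 4 * 0 + 1) / (3 * 0 + 2) = (1::real)" by simp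
    next
      fix x :: real assume x: "x \<ge> 0"
      show "2 * (6 * x\<^sup>2 + 4 * x + 1) / (3 * x + 2) \<ge> 1 + x" using x
        by (simp add: field_simps power2_eq_square)
      show "3 * (2 * (6 * x\<^sup>2 + 4 * x + 1) / (3 * x + 2)) \<ge> 4 * x" using x
        by (simp add: field_simps power2_eq_square)
    next
      fix x :: real assume x: "x > 0"
      define q where "q = 3 * x + 2"
      have q0: "q > 0" using x by (simp add: q_def)
      have der: "((\<lambda>x. 2 * (6 * x\<^sup>2 + 4 * x + 1) / (3 * x + 2)) has_real_derivative (2 * (18 * x\<^sup>2 + 24 * x + 5) / q\<^sup>2)) (at x)"
        by (rule derivative_eq_intros refl | use q0 x in \<open>simp add: q_def field_simps power2_eq_square\<close>)+
      define N where "N = 6 * x\<^sup>2 + 4 * x + 1"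
      define M where "M = 18 * x\<^sup>2 + 24 * x + 5"
      define K where "K = 9 * x\<^sup>2 + 6 * x + 2"
      have Hx: "2 * N / q - x = K / q" using q0 by (simp add: N_def K_def q_def field_simps power2_eq_square)
      have L: "2 * M / q\<^sup>2 * (K / q) = 2 * M * K / q ^ 3" by (simp add: power2_eq_square power3_eq_cube)
      have R: "2 * N / q = 2 * N * q\<^sup>2 / q ^ 3" using q0 by (simp add: power2_eq_square power3_eq_cube)
      have poly: "2 * M * K - 2 * N * q\<^sup>2 = 2 * (108 * x ^ 4 + 216 * x ^ 3 + 144 * x\<^sup>2 + 50 * x + 6)"
        unfolding M_def K_def N_def q_def by algebra
      have pp: "2 * (108 * x ^ 4 + 216 * x ^ 3 + 144 * x\<^sup>2 + 50 * x + 6) > 0" using x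
        by (intro mult_pos_pos add_nonneg_pos add_nonneg_nonneg mult_nonneg_nonneg) auto
      have "2 * N * q\<^sup>2 < 2 * M * K" using poly pp by linarith
      then have "2 * N * q\<^sup>2 / q ^ 3 < 2 * M * K / q ^ 3" using q0 by (intro divide_strict_right_mono) auto
      moreover have "2 * M / q\<^sup>2 * (2 * N / q - x) = 2 * M * K / q ^ 3" using Hx L by simp
      ultimately have "2 * M / q\<^sup>2 * (2 * N / q - x) > 2 * N / q" using R by simp
      then show "\<exists>d. ((\<lambda>x. 2 * (6 * x\<^sup>2 + 4 * x + 1) / (3 * x + 2)) has_real_derivative d) (at x) \<and>
          d * (2 * (6 * x\<^sup>2 + 4 * x + 1) / (3 * x + 2) - x) > 2 * (6 * x\<^sup>2 + 4 * x + 1) / (3 * x + 2)"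
        using der unfolding N_def M_def q_def by blast
    qed
  qed
  then show "\<And>\<rho> p. \<rho> > 0 \<Longrightarrow> p > 0 \<Longrightarrow> enthalpy e \<rho> p = HH e (p / \<rho>)"
    and "continuous_on {0..} (HH e)" and "HH e 0 = 1"
    and "\<And>x. x \<ge> 0 \<Longrightarrow> HH e x \<ge> 1 + x"
    and "\<And>x. x \<ge> 0 \<Longrightarrow> 3 * HH e x \<ge> 4 * x"
    and "\<And>x. x > 0 \<Longrightarrow> \<exists>d. (HH e has_real_derivative d) (at x) \<and> d * (HH e x - x) > HH e x"
    by auto
qed


lemma eos_props:
  assumes ok: "eos_ok e" and r0: "\<rho> > 0" and p0: "p > 0"
  shows "\<rho> * enthalpy e \<rho> p > p" "(\<rho> * enthalpy e \<rho> p - p)\<^sup>2 - \<rho>\<^sup>2 - p\<^sup>2 \<ge> 0"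
    "sound_speed_sq e \<rho> p \<ge> 0" "sound_speed_sq e \<rho> p * ((\<rho> * enthalpy e \<rho> p - p)\<^sup>2 - \<rho>\<^sup>2) \<ge> p\<^sup>2"
proof -
  have "\<rho> * enthalpy e \<rho> p > p \<and> (\<rho> * enthalpy e \<rho> p - p)\<^sup>2 - \<rho>\<^sup>2 - p\<^sup>2 \<ge> 0 \<and>
    sound_speed_sq e \<rho> p \<ge> 0 \<and> sound_speed_sq e \<rho> p * ((\<rho> * enthalpy e \<rho> p - p)\<^sup>2 - \<rho>\<^sup>2) \<ge> p\<^sup>2"
  proof (cases e)
    case (ID_EOS g)
    then have "1 < g" "g \<le> 2" using ok by (auto simp: eos_ok_def)
    then show ?thesis using id_props[OF r0 p0, of g] ID_EOS by simp
  next
    case TM_EOS then show ?thesis using tm_props[OF r0 p0] by simp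
  next
    case IP_EOS then show ?thesis using ip_props[OF r0 p0] by simp
  next
    case RC_EOS then show ?thesis using rc_props[OF r0 p0] by simp
  qed
  then show "\<rho> * enthalpy e \<rho> p > p" "(\<rho> * enthalpy e \<rho> p - p)\<^sup>2 - \<rho>\<^sup>2 - p\<^sup>2 \<ge> 0"
    "sound_speed_sq e \<rho> p \<ge> 0" "sound_speed_sq e \<rho> p * ((\<rho> * enthalpy e \<rho> p - p)\<^sup>2 - \<rho>\<^sup>2) \<ge> p\<^sup>2"
    by auto
qed

lemma prim_props:
  assumes ok: "eos_ok e" and u: "u \<in> Uad"
  shows "\<exists>\<rho> v p. prim e u = (\<rho>, v, p) \<and> \<rho> > 0 \<and> p > 0 \<and> \<bar>v\<bar> < 1 \<and> cons_of e \<rho> v p = u"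
proof -
  obtain D m E where uu: "u = (D, m, E)" by (cases u) auto
  have uD: "(D, m, E) \<in> Uad" using u uu by simp
  show ?thesis unfolding uu
    using prim_char[OF HH_props(1)[OF ok] HH_props(2-6)[OF ok] uD] by blast
qed

definition Ucl :: "(real \<times> real \<times> real) set" where
  "Ucl = {(D, m, E). D \<ge> 0 \<and> E \<ge> sqrt (D\<^sup>2 + m\<^sup>2)}"

lemma key:
  assumes ok: "eos_ok e" and u: "u \<in> Uad" and l: "l \<ge> spec_rad e u"
  shows "l *\<^sub>R u - flux e u \<in> Ucl" and "l *\<^sub>R u + flux e u \<in> Ucl"
proof -
  obtain \<rho> v p where pr: "prim e u = (\<rho>, v, p)" and r0: "\<rho> > 0" and p0: "p > 0" and v1: "\<bar>v\<bar> < 1"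
    and cu: "cons_of e \<rho> v p = u" using prim_props[OF ok u] by blast
  define P where "P = \<rho> * enthalpy e \<rho> p"
  define G where "G = 1 / sqrt (1 - v\<^sup>2)"
  define c where "c = sqrt (sound_speed_sq e \<rho> p)"
  note ep = eos_props[OF ok r0 p0, folded P_def]
  have ss0: "0 \<le> sound_speed_sq e \<rho> p" by (rule eos_props(3)[OF ok r0 p0])
  have c0: "c \<ge> 0" using ss0 by (simp add: c_def)
  have cc: "c\<^sup>2 = sound_speed_sq e \<rho> p" using eos_props(3)[OF ok r0 p0] by (simp add: c_def)
  have cs: "c\<^sup>2 * ((P - p)\<^sup>2 - \<rho>\<^sup>2) \<ge> p\<^sup>2" using ep(4) cc by simp
  have vv: "1 - v\<^sup>2 > 0" using v1 by (simp add: abs_square_less_1)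
  have G0: "G > 0" using vv by (simp add: G_def)
  have GG: "G\<^sup>2 * (1 - v\<^sup>2) = 1" using vv by (simp add: G_def power_divide)
  have uu: "u = (\<rho> * G, P * G\<^sup>2 * v, P * G\<^sup>2 - p)" using cu[symmetric] unfolding cons_of_eq G_def[symmetric] P_def
    by simp
  have vel: "vel e u = v" and pres: "pres e u = p" and ss: "sound_speed e u = c"
    using pr by (simp_all add: vel_def pres_def sound_speed_def c_def)
  have lr: "l \<ge> (\<bar>v\<bar> + c) / (1 + c * \<bar>v\<bar>)" using l by (simp add: spec_rad_def vel ss mult.commute)
  have lr': "l \<ge> (\<bar>- v\<bar> + c) / (1 + c * \<bar>- v\<bar>)" using lr by simp
  have GG': "G\<^sup>2 * (1 - (- v)\<^sup>2) = 1" using GG by simp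
  have v1': "\<bar>- v\<bar> < 1" using v1 by simp
  note C1 = core_alg[OF r0 p0 ep(1) v1 G0 GG c0 cs ep(2) lr]
  note C2 = core_alg[OF r0 p0 ep(1) v1' G0 GG' c0 cs ep(2) lr']
  have fl: "flux e u = (\<rho> * G * v, P * G\<^sup>2 * v * v + p, P * G\<^sup>2 * v)"
  proof -
    have fl0: "flux e u = (case u of (D, m, E) \<Rightarrow> (D * v, m * v + p, m))" by (simp add: flux_def vel pres)
    show ?thesis unfolding fl0 by (subst uu) simp
  qed
  show "l *\<^sub>R u - flux e u \<in> Ucl"
  proof -
    have "l *\<^sub>R u - flux e u = (\<rho> * G * (l - v), P * G\<^sup>2 * v * (l - v) - p, l * (P * G\<^sup>2 - p) - P * G\<^sup>2 * v)"
      unfolding fl by (subst uu) (simp add: algebra_simps)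
    then show ?thesis using C1 by (simp add: Ucl_def)
  qed
  show "l *\<^sub>R u + flux e u \<in> Ucl"
  proof -
    have e1: "l *\<^sub>R u + flux e u = (\<rho> * G * (l - - v), - (P * G\<^sup>2 * (- v) * (l - - v) - p), l * (P * G\<^sup>2 - p) - P * G\<^sup>2 * (- v))"
      unfolding fl by (subst uu) (simp add: algebra_simps)
    have sq: "(- (P * G\<^sup>2 * (- v) * (l - - v) - p))\<^sup>2 = (P * G\<^sup>2 * (- v) * (l - - v) - p)\<^sup>2"
      by (rule power2_minus)
    show ?thesis unfolding e1 Ucl_def using C2 sq by simp
  qed
qed


lemma sqrt_scale: "c \<ge> 0 \<Longrightarrow> sqrt ((c * a)\<^sup>2 + (c * b)\<^sup>2) = c * sqrt (a\<^sup>2 + b\<^sup>2)"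
proof -
  assume c: "c \<ge> 0"
  have "(c * a)\<^sup>2 + (c * b)\<^sup>2 = c\<^sup>2 * (a\<^sup>2 + b\<^sup>2)" by (simp add: algebra_simps power_mult_distrib)
  then show ?thesis using c by (simp add: real_sqrt_mult)
qed

lemma cone:
  assumes x: "(x1, x2, x3) \<in> Uad" and y: "(y1, y2, y3) \<in> Ucl" and z: "(z1, z2, z3) \<in> Ucl"
    and a: "\<alpha> > 0" and b: "\<beta> \<ge> 0"
  shows "(\<alpha> * x1 + \<beta> * y1 + \<beta> * z1, \<alpha> * x2 + \<beta> * y2 + \<beta> * z2, \<alpha> * x3 + \<beta> * y3 + \<beta> * z3) \<in> Uad"
proof -
  have x1: "x1 > 0" and x3: "x3 > sqrt (x1\<^sup>2 + x2\<^sup>2)" using x by (auto simp: Uad_def)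
  have y1: "y1 \<ge> 0" and y3: "y3 \<ge> sqrt (y1\<^sup>2 + y2\<^sup>2)" using y by (auto simp: Ucl_def)
  have z1: "z1 \<ge> 0" and z3: "z3 \<ge> sqrt (z1\<^sup>2 + z2\<^sup>2)" using z by (auto simp: Ucl_def)
  have D: "\<alpha> * x1 + \<beta> * y1 + \<beta> * z1 > 0" using x1 y1 z1 a b
    by (intro add_pos_nonneg mult_pos_pos mult_nonneg_nonneg) auto
  have "sqrt ((\<alpha> * x1 + \<beta> * y1 + \<beta> * z1)\<^sup>2 + (\<alpha> * x2 + \<beta> * y2 + \<beta> * z2)\<^sup>2)
      \<le> sqrt ((\<alpha> * x1 + \<beta> * y1)\<^sup>2 + (\<alpha> * x2 + \<beta> * y2)\<^sup>2) + sqrt ((\<beta> * z1)\<^sup>2 + (\<beta> * z2)\<^sup>2)"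
    by (rule real_sqrt_sum_squares_triangle_ineq)
  also have "\<dots> \<le> sqrt ((\<alpha> * x1)\<^sup>2 + (\<alpha> * x2)\<^sup>2) + sqrt ((\<beta> * y1)\<^sup>2 + (\<beta> * y2)\<^sup>2) + sqrt ((\<beta> * z1)\<^sup>2 + (\<beta> * z2)\<^sup>2)"
    using real_sqrt_sum_squares_triangle_ineq[of "\<alpha> * x1" "\<beta> * y1" "\<alpha> * x2" "\<beta> * y2"] by simp
  also have "\<dots> = \<alpha> * sqrt (x1\<^sup>2 + x2\<^sup>2) + \<beta> * sqrt (y1\<^sup>2 + y2\<^sup>2) + \<beta> * sqrt (z1\<^sup>2 + z2\<^sup>2)"
    using a b by (simp add: sqrt_scale)
  also have "\<dots> < \<alpha> * x3 + \<beta> * y3 + \<beta> * z3"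
  proof -
    have "\<alpha> * sqrt (x1\<^sup>2 + x2\<^sup>2) < \<alpha> * x3" using a x3 by simp
    moreover have "\<beta> * sqrt (y1\<^sup>2 + y2\<^sup>2) \<le> \<beta> * y3" using b y3 by (simp add: mult_left_mono)
    moreover have "\<beta> * sqrt (z1\<^sup>2 + z2\<^sup>2) \<le> \<beta> * z3" using b z3 by (simp add: mult_left_mono)
    ultimately show ?thesis by linarith
  qed
  finally show ?thesis using D by (simp add: Uad_def)
qed

theorem theorem1:
  fixes e :: eos and dx dt w :: real and ul uc ur :: "real \<times> real \<times> real"
  assumes "eos_ok e"
    and "dx > 0" and "dt > 0" and "w > 0"
    and "ul \<in> Uad" and "uc \<in> Uad" and "ur \<in> Uad"
    and "dt * (lam e ul uc + lam e uc ur) / (2 * w * dx) < 1"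
  shows "uc - (dt / (w * dx)) *\<^sub>R (rusanov e uc ur - rusanov e ul uc) \<in> Uad"
proof -
  note ok = assms(1)
  define k where "k = dt / (w * dx)"
  define Ll where "Ll = lam e ul uc"
  define Lr where "Lr = lam e uc ur"
  have k0: "k > 0" using assms(2-4) by (simp add: k_def)
  have alpha: "1 - k * (Ll + Lr) / 2 > 0"
  proof -
    have "k * (Ll + Lr) / 2 = dt * (lam e ul uc + lam e uc ur) / (2 * w * dx)" by (simp add: k_def Ll_def Lr_def)
    then show ?thesis using assms(8) by simp
  qed
  have Lr1: "Lr \<ge> spec_rad e ur" by (simp add: Lr_def lam_def)
  have Ll1: "Ll \<ge> spec_rad e ul" by (simp add: Ll_def lam_def)
  have Y: "Lr *\<^sub>R ur - flux e ur \<in> Ucl" by (rule key(1)[OF ok assms(7) Lr1])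
  have Z: "Ll *\<^sub>R ul + flux e ul \<in> Ucl" by (rule key(2)[OF ok assms(5) Ll1])
  obtain x1 x2 x3 where xx: "uc = (x1, x2, x3)" by (cases uc) auto
  obtain y1 y2 y3 where yy: "Lr *\<^sub>R ur - flux e ur = (y1, y2, y3)" by (cases "Lr *\<^sub>R ur - flux e ur") auto
  obtain z1 z2 z3 where zz: "Ll *\<^sub>R ul + flux e ul = (z1, z2, z3)" by (cases "Ll *\<^sub>R ul + flux e ul") auto
  have eq: "uc - k *\<^sub>R (rusanov e uc ur - rusanov e ul uc)
      = (1 - k * (Ll + Lr) / 2) *\<^sub>R uc + (k / 2) *\<^sub>R (Lr *\<^sub>R ur - flux e ur) + (k / 2) *\<^sub>R (Ll *\<^sub>R ul + flux e ul)"
    unfolding rusanov_def Ll_def[symmetric] Lr_def[symmetric]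
    by (simp add: algebra_simps add_divide_distrib)
  have "(1 - k * (Ll + Lr) / 2) *\<^sub>R uc + (k / 2) *\<^sub>R (Lr *\<^sub>R ur - flux e ur) + (k / 2) *\<^sub>R (Ll *\<^sub>R ul + flux e ul) \<in> Uad"
    unfolding xx yy zz using cone[OF assms(6)[unfolded xx] Y[unfolded yy] Z[unfolded zz] alpha, of "k / 2"] k0
    by simp
  then show ?thesis using eq by (simp add: k_def)
qed

end
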